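(* Let $p=4f+1$ be a prime, and write $p=x^2+4y^2$ with integers $x,y$ and $x\equiv1\pmod 4$. Then $g_4(p)=4$ if $p=5$; $g_4(p)=3$ if $p\in\{13,17,29\}$; and $g_4(p)=2$ otherwise.
   Context: For $a\in\mathbb{F}_p^*$, $s_d(p,a)=\min\{k\mid a=\sum_{i=1}^k a_i^d,\ a_i\in\mathbb{F}_p^*\}$, and $g_d(p)=\max_{a\in\mathbb{F}_p^*}s_d(p,a)$ (the smallest $k$ such that every element of $\mathbb{F}_p^*$ is a sum of $k$ nonzero $d$-th powers). *)

theory Defs
  imports "HOL-Number_Theory.Number_Theory"
begin

text \<open>Elements of F_p are represented by integers modulo p.
  a is a sum of k nonzero d-th powers in F_p.\<close>
definition sum_nz_powers :: "nat \<Rightarrow> nat \<Rightarrow> nat \<Rightarrow> int \<Rightarrow> bool" where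
  "sum_nz_powers d p k a \<longleftrightarrow>
     (\<exists>as :: nat \<Rightarrow> int. (\<forall>i<k. \<not> int p dvd as i) \<and>
        [(\<Sum>i<k. as i ^ d) = a] (mod int p))"

definition s_pow :: "nat \<Rightarrow> nat \<Rightarrow> int \<Rightarrow> nat" where
  "s_pow d p a = (LEAST k. sum_nz_powers d p k a)"

definition g_pow :: "nat \<Rightarrow> nat \<Rightarrow> nat" where
  "g_pow d p = Max ((\<lambda>a. s_pow d p a) ` {1..int p - 1})"

end

theory Submission
  imports Defs
begin

locale qr =
  fixes p :: nat
  assumes pr: "prime p" and p4: "p mod 4 = 1"
begin

abbreviation eta :: "int \<Rightarrow> int" where "eta x \<equiv> Legendre x (int p)"

lemma p_ge5: "p \<ge> 5"
  using prime_gt_1_nat[OF pr] p4 by presburger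

lemma pri: "prime (int p)" using pr by simp

lemma p_gt2: "p > 2" using p_ge5 by simp

lemma small_cong_eq:
  assumes "a \<in> {-1,0,1}" "b \<in> {-1,0,1}" "[a = b] (mod int p)"
  shows "a = b"
proof (rule ccontr)
  assume ne: "a \<noteq> b"
  have d: "int p dvd (a - b)" using assms(3) by (simp add: cong_iff_dvd_diff cong_sym_eq)
  have "a - b \<in> {-2,-1,1,2}" using assms(1,2) ne by auto
  then have "int p dvd 2 \<or> int p dvd 1" using d by auto
  then have "int p \<le> 2" by (auto dest: zdvd_imp_le)
  then show False using p_gt2 by simp
qed

lemma eta_cong: "[x = y] (mod int p) \<Longrightarrow> eta x = eta y"
proof -
  assume h: "[x = y] (mod int p)"
  have "[x = 0] (mod int p) \<longleftrightarrow> [y = 0] (mod int p)"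
    using h by (meson cong_trans cong_sym)
  moreover have "QuadRes (int p) x \<longleftrightarrow> QuadRes (int p) y"
    unfolding QuadRes_def using h by (meson cong_trans cong_sym)
  ultimately show ?thesis unfolding Legendre_def by simp
qed

lemma eta_mod: "eta (x mod int p) = eta x"
  by (rule eta_cong) (simp add: cong_def)

lemma eta_vals: "eta x \<in> {-1,0,1}"
  unfolding Legendre_def by auto

lemma eta_zero: "eta x = 0 \<longleftrightarrow> int p dvd x"
  unfolding Legendre_def by (auto simp: cong_0_iff)

lemma eta_nz: "\<not> int p dvd x \<Longrightarrow> eta x = 1 \<or> eta x = -1"
  using eta_vals[of x] eta_zero[of x] by auto

lemma eta_euler: "[eta x = x ^ ((p - 1) div 2)] (mod int p)"
  using euler_criterion[OF pr p_gt2] by blast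

lemma eta_mult: "eta (x * y) = eta x * eta y"
proof -
  have "[eta (x*y) = (x*y) ^ ((p - 1) div 2)] (mod int p)" by (rule eta_euler)
  also have "(x*y) ^ ((p - 1) div 2) = x ^ ((p - 1) div 2) * y ^ ((p - 1) div 2)"
    by (simp add: power_mult_distrib)
  also have "[\<dots> = eta x * eta y] (mod int p)"
    by (intro cong_mult; rule cong_sym, rule eta_euler)
  finally have c: "[eta (x*y) = eta x * eta y] (mod int p)" .
  have "eta x * eta y \<in> {-1,0,1}" using eta_vals[of x] eta_vals[of y] by auto
  then show ?thesis by (rule small_cong_eq[OF eta_vals _ c])
qed

lemma eta_sq: "\<not> int p dvd x \<Longrightarrow> eta (x^2) = 1"
proof -
  assume h: "\<not> int p dvd x"
  have "\<not> int p dvd x^2" using h prime_dvd_power_iff[OF pri] by simp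
  then show ?thesis unfolding Legendre_def QuadRes_def by (auto simp: cong_0_iff intro!: exI[of _ x])
qed

lemma eta_m1: "eta (-1) = 1"
proof -
  have "even ((p - 1) div 2)" using p4 by presburger
  then have "(-1::int) ^ ((p - 1) div 2) = 1" by simp
  then have c: "[eta (-1) = 1] (mod int p)" using eta_euler[of "-1"] by simp
  show ?thesis using small_cong_eq[OF eta_vals _ c] by simp
qed

lemma eta_one: "eta 1 = 1"
  using eta_sq[of 1] p_gt2 by simp

lemma eta_cube: "eta x ^ 3 = eta x"
  using eta_vals[of x] by auto

end

context qr begin

lemma p_pos: "int p > 0" using p_ge5 by simp

lemma coprime_p: "\<not> int p dvd c \<Longrightarrow> coprime c (int p)"
  using prime_imp_coprime[OF pri] by (simp add: coprime_commute)

lemma mod_in_R: "x mod int p \<in> {0..<int p}"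
  using p_pos by simp

lemma reindex_affine:
  assumes c: "\<not> int p dvd c"
  shows "(\<Sum>x\<in>{0..<int p}. g ((c*x + d) mod int p)) = (\<Sum>x\<in>{0..<int p}. (g x :: int))"
proof -
  let ?h = "\<lambda>x. (c*x+d) mod int p"
  have inj: "inj_on ?h {0..<int p}"
  proof (rule inj_onI)
    fix x y assume x: "x \<in> {0..<int p}" and y: "y \<in> {0..<int p}" and e: "?h x = ?h y"
    from e have "[c*x + d = c*y + d] (mod int p)" by (simp add: cong_def)
    then have "[c*x = c*y] (mod int p)" by (simp add: cong_add_rcancel)
    then have "[x = y] (mod int p)" using cong_mult_lcancel[OF coprime_p[OF c]] by blast
    then show "x = y" using x y by (simp add: cong_def)
  qed
  have sub: "?h ` {0..<int p} \<subseteq> {0..<int p}" using mod_in_R by blast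
  have eq: "?h ` {0..<int p} = {0..<int p}" using endo_inj_surj[OF _ sub inj] by simp
  have "(\<Sum>x\<in>{0..<int p}. g x) = sum g (?h ` {0..<int p})" using eq by simp
  also have "\<dots> = (\<Sum>x\<in>{0..<int p}. g (?h x))" using sum.reindex[OF inj] by simp
  finally show ?thesis by simp
qed

lemma eta_one_QR: "eta n = 1 \<Longrightarrow> QuadRes (int p) n"
  unfolding Legendre_def by (auto split: if_splits)

lemma eta_QR_one: "\<not> int p dvd n \<Longrightarrow> QuadRes (int p) n \<Longrightarrow> eta n = 1"
  unfolding Legendre_def by (auto simp: cong_0_iff)

lemma dvd_small_zero: "int p dvd k \<Longrightarrow> \<bar>k\<bar> < int p \<Longrightarrow> k = 0"
  using dvd_imp_le_int by force

lemma dvd_small_p: assumes "int p dvd k" "0 < k" "k < 2 * int p" shows "k = int p"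
proof -
  obtain q where q: "k = int p * q" using assms(1) by blast
  have "q > 0" using assms(2) q p_pos by (simp add: zero_less_mult_iff)
  moreover have "q < 2" using assms(3) q p_pos by simp
  ultimately have "q = 1" by simp
  then show ?thesis using q by simp
qed

lemma exists_nonres: "\<exists>n. eta n = -1"
proof (rule ccontr)
  assume "\<not> ?thesis"
  then have all: "\<not> int p dvd n \<Longrightarrow> QuadRes (int p) n" for n
    using eta_nz[of n] eta_one_QR by auto
  let ?H = "{1..(int p - 1) div 2}"
  have "{1..<int p} \<subseteq> (\<lambda>x. x^2 mod int p) ` ?H"
  proof
    fix z assume z: "z \<in> {1..<int p}"
    then have nz: "\<not> int p dvd z" using zdvd_imp_le by fastforce
    obtain y where y: "[y^2 = z] (mod int p)" using all[OF nz] unfolding QuadRes_def by blast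
    define r where "r = y mod int p"
    have ry: "[r = y] (mod int p)" unfolding r_def by (simp add: cong_def)
    have rz: "[r^2 = z] (mod int p)" using cong_trans[OF cong_pow[OF ry] y] .
    have r0: "0 \<le> r" "r < int p" unfolding r_def using p_pos by auto
    have "r \<noteq> 0"
    proof
      assume "r = 0"
      then have "[z = 0] (mod int p)" using rz by (simp add: cong_sym_eq)
      then show False using nz by (simp add: cong_0_iff)
    qed
    have zm: "z mod int p = z" using z by simp
    show "z \<in> (\<lambda>x. x^2 mod int p) ` ?H"
    proof (cases "r \<le> (int p - 1) div 2")
      case True
      then have "r \<in> ?H" using \<open>r \<noteq> 0\<close> r0 by auto
      moreover have "r^2 mod int p = z" using rz zm by (simp add: cong_def)
      ultimately show ?thesis by force
    next
      case False
      have odd: "odd (int p)" using p4 by presburger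
      then obtain k where k: "int p = 2*k+1" by (auto elim!: oddE)
      then have "(int p - 1) div 2 = k" by simp
      then have "int p - r \<in> ?H" using False r0 k by auto
      moreover have "(int p - r)^2 mod int p = z"
      proof -
        have "(int p - r)^2 = r^2 + int p * (int p - 2*r)" by (simp add: power2_eq_square algebra_simps)
        then have "(int p - r)^2 mod int p = r^2 mod int p" by simp
        then show ?thesis using rz zm by (simp add: cong_def)
      qed
      ultimately show ?thesis by force
    qed
  qed
  then have "card {1..<int p} \<le> card ((\<lambda>x. x^2 mod int p) ` ?H)" by (intro card_mono) auto
  also have "\<dots> \<le> card ?H" by (rule card_image_le) simp
  finally have "nat (int p - 1) \<le> nat ((int p - 1) div 2)" by simp
  then show False using p_ge5 by linarith
qed

lemma sum_eta: "(\<Sum>x\<in>{0..<int p}. eta x) = 0"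
proof -
  obtain n where n: "eta n = -1" using exists_nonres by (elim exE)
  have nd: "\<not> int p dvd n"
  proof
    assume "int p dvd n"
    then have "eta n = 0" by (simp only: eta_zero)
    then show False using n by simp
  qed
  have 1: "(\<Sum>x\<in>{0..<int p}. eta ((n*x + 0) mod int p)) = (\<Sum>x\<in>{0..<int p}. eta x)"
    by (rule reindex_affine[OF nd])
  have 2: "eta ((n*x + 0) mod int p) = - eta x" for x
  proof -
    have "eta ((n*x + 0) mod int p) = eta n * eta x" by (simp only: add_0_right eta_mod eta_mult)
    then show ?thesis using n by simp
  qed
  have "(\<Sum>x\<in>{0..<int p}. eta x) = (\<Sum>x\<in>{0..<int p}. - eta x)"
    using 1 2 by simp
  also have "\<dots> = - (\<Sum>x\<in>{0..<int p}. eta x)" by (simp add: sum_negf)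
  finally show ?thesis by simp
qed
end

context qr begin

lemma odd_p: "odd (int p)" using p4 by presburger

lemma mod_cong_self: "[x mod int p = x] (mod int p)"
  by (simp add: cong_def)

lemma R_mod: "x \<in> {0..<int p} \<Longrightarrow> x mod int p = x"
  by simp

lemma sqroots:
  assumes r: "r \<in> {1..<int p}"
  shows "{t \<in> {0..<int p}. [t^2 = r^2] (mod int p)} = {r, int p - r}"
proof (intro equalityI subsetI)
  fix t assume "t \<in> {t \<in> {0..<int p}. [t^2 = r^2] (mod int p)}"
  then have t: "0 \<le> t" "t < int p" and c: "[t^2 = r^2] (mod int p)" by auto
  have "int p dvd t^2 - r^2" using c by (simp add: cong_iff_dvd_diff)
  moreover have "t^2 - r^2 = (t - r) * (t + r)" by (simp add: power2_eq_square algebra_simps)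
  ultimately have "int p dvd (t - r) * (t + r)" by simp
  then have "int p dvd (t - r) \<or> int p dvd (t + r)" using prime_dvd_mult_iff[OF pri] by blast
  then show "t \<in> {r, int p - r}"
  proof
    assume "int p dvd (t - r)"
    moreover have "\<bar>t - r\<bar> < int p" using t r by auto
    ultimately have "t - r = 0" by (rule dvd_small_zero)
    then show ?thesis by simp
  next
    assume "int p dvd (t + r)"
    moreover have "0 < t + r" "t + r < 2 * int p" using t r by auto
    ultimately have "t + r = int p" by (rule dvd_small_p)
    then show ?thesis by simp
  qed
next
  fix t assume "t \<in> {r, int p - r}"
  then show "t \<in> {t \<in> {0..<int p}. [t^2 = r^2] (mod int p)}"
  proof
    assume "t = r" then show ?thesis using r by simp
  next
    assume "t \<in> {int p - r}"
    then have tt: "t = int p - r" by simp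
    have "t^2 - r^2 = int p * (int p - 2 * r)" unfolding tt by (simp add: power2_eq_square algebra_simps)
    then have "[t^2 = r^2] (mod int p)" by (simp add: cong_iff_dvd_diff)
    then show ?thesis using r tt by simp
  qed
qed

lemma eta_nonQR: "\<not> int p dvd z \<Longrightarrow> \<not> QuadRes (int p) z \<Longrightarrow> eta z = -1"
  unfolding Legendre_def by (simp add: cong_0_iff)

lemma QR_rep:
  assumes nz: "\<not> int p dvd z" and q: "QuadRes (int p) z"
  obtains r where "r \<in> {1..<int p}" "[r^2 = z] (mod int p)"
proof -
  obtain y where y: "[y^2 = z] (mod int p)" using q unfolding QuadRes_def by blast
  define r where "r = y mod int p"
  have ry: "[r = y] (mod int p)" unfolding r_def by (simp add: cong_def)
  have rz: "[r^2 = z] (mod int p)" using cong_trans[OF cong_pow[OF ry] y] .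
  have r0: "0 \<le> r" "r < int p" unfolding r_def using p_pos by auto
  have "r \<noteq> 0"
  proof
    assume "r = 0"
    then have "[z = 0] (mod int p)" using rz by (simp add: cong_sym_eq)
    then show False using nz by (simp add: cong_0_iff)
  qed
  then have "r \<in> {1..<int p}" using r0 by auto
  then show ?thesis using that rz by blast
qed

lemma card_sqroots:
  "int (card {t \<in> {0..<int p}. [t^2 = z] (mod int p)}) = 1 + eta z"
proof (cases "int p dvd z")
  case True
  have "{t \<in> {0..<int p}. [t^2 = z] (mod int p)} = {0}"
  proof (intro equalityI subsetI)
    fix t assume "t \<in> {t \<in> {0..<int p}. [t^2 = z] (mod int p)}"
    then have t: "0 \<le> t" "t < int p" and c: "[t^2 = z] (mod int p)" by auto
    have "[z = 0] (mod int p)" using True by (simp add: cong_0_iff)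
    then have "[t^2 = 0] (mod int p)" using c cong_trans by blast
    then have "int p dvd t^2" by (simp add: cong_0_iff)
    then have "int p dvd t" using prime_dvd_power_iff[OF pri] by simp
    moreover have "\<bar>t\<bar> < int p" using t by simp
    ultimately have "t = 0" by (rule dvd_small_zero)
    then show "t \<in> {0}" by simp
  next
    fix t assume "t \<in> {0::int}"
    then show "t \<in> {t \<in> {0..<int p}. [t^2 = z] (mod int p)}"
      using True p_pos by (simp add: cong_iff_dvd_diff)
  qed
  moreover have "eta z = 0" using True eta_zero by blast
  ultimately show ?thesis by simp
next
  case False
  show ?thesis
  proof (cases "QuadRes (int p) z")
    case True
    obtain r where r: "r \<in> {1..<int p}" "[r^2 = z] (mod int p)" using QR_rep[OF False True] by blast
    have "{t \<in> {0..<int p}. [t^2 = z] (mod int p)} = {t \<in> {0..<int p}. [t^2 = r^2] (mod int p)}"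
      using r(2) by (meson cong_sym cong_trans)
    also have "\<dots> = {r, int p - r}" by (rule sqroots[OF r(1)])
    finally have e: "{t \<in> {0..<int p}. [t^2 = z] (mod int p)} = {r, int p - r}" .
    have "r \<noteq> int p - r" using odd_p by presburger
    then have "card {r, int p - r} = 2" by simp
    moreover have "eta z = 1" using eta_QR_one[OF False True] .
    ultimately show ?thesis using e by simp
  next
    case nq: False
    have e: "{t \<in> {0..<int p}. [t^2 = z] (mod int p)} = {}"
      using nq unfolding QuadRes_def by blast
    show ?thesis unfolding e using eta_nonQR[OF False nq] by simp
  qed
qed

lemma card_sqroots_le: "card {t \<in> {0..<int p}. [t^2 = z] (mod int p)} \<le> 2"
  using card_sqroots[of z] eta_vals[of z] by auto

lemma sum_sq:
  fixes g :: "int \<Rightarrow> int"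
  shows "(\<Sum>t\<in>{0..<int p}. g (t^2 mod int p)) = (\<Sum>z\<in>{0..<int p}. (1 + eta z) * g z)"
proof -
  have sub: "(\<lambda>t. t^2 mod int p) ` {0..<int p} \<subseteq> {0..<int p}" using mod_in_R by blast
  have "(\<Sum>t\<in>{0..<int p}. g (t^2 mod int p)) =
        (\<Sum>z\<in>{0..<int p}. \<Sum>t\<in>{t. t \<in> {0..<int p} \<and> t^2 mod int p = z}. g (t^2 mod int p))"
    using sum.group[OF _ _ sub, of "\<lambda>t. g (t^2 mod int p)"] by simp
  also have "\<dots> = (\<Sum>z\<in>{0..<int p}. (1 + eta z) * g z)"
  proof (rule sum.cong[OF refl])
    fix z assume z: "z \<in> {0..<int p}"
    have e: "{t. t \<in> {0..<int p} \<and> t^2 mod int p = z} = {t \<in> {0..<int p}. [t^2 = z] (mod int p)}"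
      using z by (auto simp: cong_def)
    have "(\<Sum>t\<in>{t. t \<in> {0..<int p} \<and> t^2 mod int p = z}. g (t^2 mod int p))
        = (\<Sum>t\<in>{t \<in> {0..<int p}. [t^2 = z] (mod int p)}. g z)"
      unfolding e using z by (intro sum.cong refl) (auto simp: cong_def)
    also have "\<dots> = int (card {t \<in> {0..<int p}. [t^2 = z] (mod int p)}) * g z" by simp
    also have "\<dots> = (1 + eta z) * g z" by (simp only: card_sqroots)
    finally show "(\<Sum>t\<in>{t. t \<in> {0..<int p} \<and> t^2 mod int p = z}. g (t^2 mod int p)) = (1 + eta z) * g z" .
  qed
  finally show ?thesis .
qed

end

context qr begin

definition invp :: "int \<Rightarrow> int" where
  "invp x = (SOME v. v \<in> {0..<int p} \<and> [x * v = 1] (mod int p))"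

lemma invp:
  assumes "\<not> int p dvd x"
  shows "invp x \<in> {0..<int p}" "[x * invp x = 1] (mod int p)"
proof -
  obtain v where v: "[x * v = 1] (mod int p)" using cong_solve_coprime_int[OF coprime_p[OF assms]] by blast
  have "v mod int p \<in> {0..<int p} \<and> [x * (v mod int p) = 1] (mod int p)"
  proof
    show "v mod int p \<in> {0..<int p}" by (rule mod_in_R)
    have "[x * (v mod int p) = x * v] (mod int p)" by (intro cong_mult cong_refl) (simp add: cong_def)
    then show "[x * (v mod int p) = 1] (mod int p)" using v cong_trans by blast
  qed
  then have "invp x \<in> {0..<int p} \<and> [x * invp x = 1] (mod int p)"
    unfolding invp_def by (rule someI)
  then show "invp x \<in> {0..<int p}" "[x * invp x = 1] (mod int p)" by auto
qed

lemma invp_nz: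
  assumes "\<not> int p dvd x" shows "\<not> int p dvd invp x"
proof
  assume "int p dvd invp x"
  then have "int p dvd x * invp x" by simp
  then have "[x * invp x = 0] (mod int p)" by (simp add: cong_0_iff)
  then have "[1 = 0] (mod int p)" using invp(2)[OF assms] by (meson cong_sym cong_trans)
  then have "int p dvd 1" by (simp add: cong_0_iff)
  then show False using p_gt2 by simp
qed

lemma R'_nd: "x \<in> {0..<int p} - {0} \<Longrightarrow> \<not> int p dvd x"
  using zdvd_imp_le by fastforce

lemma invp_sub: "invp ` ({0..<int p} - {0}) \<subseteq> {0..<int p} - {0}"
proof -
  let ?A = "{0..<int p} - {0}"
  have sub: "invp ` ?A \<subseteq> ?A"
  proof
    fix y assume "y \<in> invp ` ?A"
    then obtain x where x: "x \<in> ?A" "y = invp x" by blast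
    have nd: "\<not> int p dvd x" using R'_nd[OF x(1)] .
    have "y \<noteq> 0" using invp_nz[OF nd] x(2) by auto
    then show "y \<in> ?A" using invp(1)[OF nd] x(2) by simp
  qed
  then show ?thesis .
qed

lemma invp_inj: "inj_on invp ({0..<int p} - {0})"
proof -
  let ?A = "{0..<int p} - {0}"
  show "inj_on invp ?A"
  proof (rule inj_onI)
    fix x y assume x: "x \<in> ?A" and y: "y \<in> ?A" and e: "invp x = invp y"
    have nx: "\<not> int p dvd x" using R'_nd[OF x] .
    have ny: "\<not> int p dvd y" using R'_nd[OF y] .
    have "[x * (y * invp y) = x * 1] (mod int p)" by (intro cong_mult cong_refl invp(2)[OF ny])
    moreover have "[y * (x * invp x) = y * 1] (mod int p)" by (intro cong_mult cong_refl invp(2)[OF nx])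
    moreover have "x * (y * invp y) = y * (x * invp x)" using e by (simp add: algebra_simps)
    ultimately have "[x = y] (mod int p)" by (metis cong_sym cong_trans mult_1_right)
    then show "x = y" using x y by (simp add: cong_def)
  qed
qed

lemma invp_bij: "invp ` ({0..<int p} - {0}) = {0..<int p} - {0}"
  using endo_inj_surj[OF _ invp_sub invp_inj] by simp

lemma sum_R_minus0:
  fixes g :: "int \<Rightarrow> int"
  shows "(\<Sum>x\<in>{0..<int p}. g x) = g 0 + (\<Sum>x\<in>{0..<int p} - {0}. g x)"
  using sum.remove[of "{0..<int p}" 0 g] p_pos by simp

lemma card_R'_int: "(\<Sum>x\<in>{0..<int p} - {0}. (1::int)) = int p - 1"
proof -
  have "card ({0..<int p} - {0}) = p - 1" using p_pos by simp
  then show ?thesis using p_ge5 by simp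
qed

lemma L4_nz:
  assumes e: "\<not> int p dvd e"
  shows "(\<Sum>x\<in>{0..<int p}. eta (x * (x + e))) = -1"
proof -
  let ?A = "{0..<int p} - {0}"
  have "(\<Sum>x\<in>{0..<int p}. eta (x * (x + e))) = (\<Sum>x\<in>?A. eta (x * (x + e)))"
    using sum_R_minus0[of "\<lambda>x. eta (x * (x + e))"] by (simp add: eta_zero)
  also have "\<dots> = (\<Sum>x\<in>?A. eta (1 + e * invp x))"
  proof (rule sum.cong[OF refl])
    fix x assume x: "x \<in> ?A"
    have nx: "\<not> int p dvd x" using R'_nd[OF x] .
    let ?v = "invp x"
    have "eta (x * (x + e)) = eta (x * (x + e)) * eta (?v^2)"
      using eta_sq[OF invp_nz[OF nx]] by simp
    also have "\<dots> = eta (x * (x + e) * ?v^2)" by (simp only: eta_mult)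
    also have "x * (x + e) * ?v^2 = (x * ?v) * ((x * ?v) + e * ?v)" by (simp add: power2_eq_square algebra_simps)
    also have "eta \<dots> = eta (1 * (1 + e * ?v))"
      by (intro eta_cong cong_mult cong_add cong_refl invp(2)[OF nx])
    finally show "eta (x * (x + e)) = eta (1 + e * invp x)" by simp
  qed
  also have "\<dots> = (\<Sum>v\<in>invp ` ?A. eta (1 + e * v))"
    by (simp add: sum.reindex[OF invp_inj])
  also have "\<dots> = (\<Sum>v\<in>?A. eta (1 + e * v))" by (simp only: invp_bij)
  also have "\<dots> = (\<Sum>v\<in>{0..<int p}. eta (1 + e * v)) - 1"
    using sum_R_minus0[of "\<lambda>v. eta (1 + e * v)"] eta_one by simp
  also have "(\<Sum>v\<in>{0..<int p}. eta (1 + e * v)) = (\<Sum>v\<in>{0..<int p}. eta ((e * v + 1) mod int p))"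
    by (simp add: eta_mod add.commute)
  also have "\<dots> = 0" using reindex_affine[OF e, of eta 1] sum_eta by simp
  finally show ?thesis by simp
qed

end

context qr begin

lemma L4_zero:
  assumes e: "int p dvd e"
  shows "(\<Sum>x\<in>{0..<int p}. eta (x * (x + e))) = int p - 1"
proof -
  have "(\<Sum>x\<in>{0..<int p}. eta (x * (x + e))) = (\<Sum>x\<in>{0..<int p}. eta (x * (x + 0)))"
  proof (intro sum.cong refl eta_cong cong_mult cong_add cong_refl)
    show "[e = 0] (mod int p)" using e by (simp add: cong_0_iff)
  qed
  also have "\<dots> = eta 0 + (\<Sum>x\<in>{0..<int p} - {0}. eta (x * (x + 0)))"
    using sum_R_minus0[of "\<lambda>x. eta (x * (x + 0))"] by simp
  also have "(\<Sum>x\<in>{0..<int p} - {0}. eta (x * (x + 0))) = (\<Sum>x\<in>{0..<int p} - {0}. 1)"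
  proof (rule sum.cong[OF refl])
    fix x assume x: "x \<in> {0..<int p} - {0}"
    show "eta (x * (x + 0)) = 1" using eta_sq[OF R'_nd[OF x]] by (simp add: power2_eq_square)
  qed
  finally show ?thesis using card_R'_int eta_zero[of 0] by simp
qed

lemma L4:
  "(\<Sum>b\<in>{0..<int p}. eta ((b + c) * (b + d))) = (if [c = d] (mod int p) then int p - 1 else -1)"
proof -
  let ?g = "\<lambda>u. eta (u * (u + (c - d)))"
  have "(\<Sum>b\<in>{0..<int p}. eta ((b + c) * (b + d))) = (\<Sum>b\<in>{0..<int p}. ?g ((1 * b + d) mod int p))"
  proof (rule sum.cong[OF refl])
    fix b
    have "eta ((b + c) * (b + d)) = eta ((b + d) * ((b + d) + (c - d)))"
      by (rule arg_cong[where f = eta]) (simp add: algebra_simps)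
    also have "\<dots> = eta (((b + d) mod int p) * (((b + d) mod int p) + (c - d)))"
      by (intro eta_cong cong_mult cong_add cong_refl) (simp_all add: cong_def)
    finally show "eta ((b + c) * (b + d)) = ?g ((1 * b + d) mod int p)" by simp
  qed
  also have "\<dots> = (\<Sum>u\<in>{0..<int p}. ?g u)"
    by (rule reindex_affine) (use p_gt2 in \<open>simp\<close>)
  also have "\<dots> = (if [c = d] (mod int p) then int p - 1 else -1)"
  proof (cases "[c = d] (mod int p)")
    case True
    then have "int p dvd (c - d)" by (simp add: cong_iff_dvd_diff)
    then show ?thesis using L4_zero True by simp
  next
    case False
    then have "\<not> int p dvd (c - d)" by (simp add: cong_iff_dvd_diff)
    then show ?thesis using L4_nz False by simp
  qed
  finally show ?thesis .
qed

definition phi :: "int \<Rightarrow> int" where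
  "phi b = (\<Sum>x\<in>{0..<int p}. eta x * eta (x^2 + b))"

lemma phi_cong: "[b = b'] (mod int p) \<Longrightarrow> phi b = phi b'"
  unfolding phi_def by (intro sum.cong refl arg_cong2[where f = "(*)"] eta_cong cong_add) auto

lemma phi_0: "phi 0 = 0"
proof -
  have "phi 0 = (\<Sum>x\<in>{0..<int p}. eta x)"
    unfolding phi_def
  proof (rule sum.cong[OF refl])
    fix x
    have "eta x * eta (x^2 + 0) = eta x ^ 3" by (simp add: eta_mult power2_eq_square power3_eq_cube)
    then show "eta x * eta (x^2 + 0) = eta x" using eta_cube by simp
  qed
  then show ?thesis using sum_eta by simp
qed

lemma phi_scale:
  assumes t: "\<not> int p dvd t"
  shows "phi (b * t^2) = eta t * phi b"
proof -
  let ?g = "\<lambda>u. eta u * eta (u^2 + b * t^2)"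
  have "phi (b * t^2) = (\<Sum>x\<in>{0..<int p}. ?g ((t * x + 0) mod int p))"
    unfolding phi_def by (rule reindex_affine[OF t, symmetric])
  also have "\<dots> = (\<Sum>x\<in>{0..<int p}. eta t * (eta x * eta (x^2 + b)))"
  proof (rule sum.cong[OF refl])
    fix x
    have "?g ((t * x + 0) mod int p) = eta (t * x) * eta ((t*x)^2 + b * t^2)"
      by (intro arg_cong2[where f = "(*)"] eta_cong cong_add cong_pow cong_refl) (simp_all add: cong_def)
    also have "(t*x)^2 + b * t^2 = t^2 * (x^2 + b)" by (simp add: algebra_simps power2_eq_square)
    also have "eta (t * x) * eta (t^2 * (x^2 + b)) = eta t * (eta x * eta (x^2 + b))"
      using eta_sq[OF t] by (simp add: eta_mult)
    finally show "?g ((t * x + 0) mod int p) = eta t * (eta x * eta (x^2 + b))" .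
  qed
  also have "\<dots> = eta t * phi b" unfolding phi_def by (simp add: sum_distrib_left)
  finally show ?thesis .
qed

end

context qr begin

lemma phi_sq_expand:
  "(phi b)^2 = (\<Sum>x\<in>{0..<int p}. \<Sum>y\<in>{0..<int p}. eta x * eta y * eta ((b + x^2) * (b + y^2)))"
proof -
  have "(phi b)^2 = phi b * phi b" by (simp add: power2_eq_square)
  also have "\<dots> = (\<Sum>x\<in>{0..<int p}. \<Sum>y\<in>{0..<int p}. (eta x * eta (x^2 + b)) * (eta y * eta (y^2 + b)))"
    unfolding phi_def by (rule sum_product)
  also have "\<dots> = (\<Sum>x\<in>{0..<int p}. \<Sum>y\<in>{0..<int p}. eta x * eta y * eta ((b + x^2) * (b + y^2)))"
    by (intro sum.cong refl) (simp add: eta_mult add.commute mult.assoc mult.left_commute)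
  finally show ?thesis .
qed

lemma eta_sq_self: "\<not> int p dvd x \<Longrightarrow> eta x * eta x = 1"
  using eta_sq[of x] by (simp add: eta_mult power2_eq_square)

lemma inner_J1:
  assumes x: "x \<in> {0..<int p}"
  shows "(\<Sum>y\<in>{0..<int p}. (if [y^2 = x^2] (mod int p) then int p * (eta x * eta y) else 0))
         = (if x = 0 then 0 else 2 * int p)"
proof (cases "x = 0")
  case True
  have e0: "eta 0 = 0" by (simp add: eta_zero)
  show ?thesis unfolding True e0 by (simp, rule sum.neutral, simp)
next
  case False
  then have x1: "x \<in> {1..<int p}" using x by auto
  have nx: "\<not> int p dvd x" using R'_nd False x by simp
  have "(\<Sum>y\<in>{0..<int p}. (if [y^2 = x^2] (mod int p) then int p * (eta x * eta y) else 0))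
      = (\<Sum>y\<in>{y \<in> {0..<int p}. [y^2 = x^2] (mod int p)}. int p * (eta x * eta y))"
    using sum.inter_filter[of "{0..<int p}" "\<lambda>y. int p * (eta x * eta y)" "\<lambda>y. [y^2 = x^2] (mod int p)"]
    by simp
  also have "\<dots> = (\<Sum>y\<in>{x, int p - x}. int p * (eta x * eta y))" by (simp only: sqroots[OF x1])
  also have "\<dots> = int p * (eta x * eta x) + int p * (eta x * eta (int p - x))"
  proof -
    have "x \<noteq> int p - x" using odd_p by presburger
    then show ?thesis by simp
  qed
  also have "eta (int p - x) = eta x"
  proof -
    have "eta (int p - x) = eta (-1 * x)" by (rule eta_cong) (simp add: cong_iff_dvd_diff)
    then show ?thesis by (simp only: eta_mult eta_m1 mult_1_left)
  qed
  finally show ?thesis using eta_sq_self[OF nx] False by simp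
qed

lemma J1: "(\<Sum>b\<in>{0..<int p}. (phi b)^2) = 2 * (int p - 1) * int p"
proof -
  let ?R = "{0..<int p}"
  let ?F = "\<lambda>b x y. eta x * eta y * eta ((b + x^2) * (b + y^2))"
  have "(\<Sum>b\<in>?R. (phi b)^2) = (\<Sum>b\<in>?R. \<Sum>x\<in>?R. \<Sum>y\<in>?R. ?F b x y)"
    by (simp only: phi_sq_expand)
  also have "\<dots> = (\<Sum>x\<in>?R. \<Sum>b\<in>?R. \<Sum>y\<in>?R. ?F b x y)" by (rule sum.swap)
  also have "\<dots> = (\<Sum>x\<in>?R. \<Sum>y\<in>?R. \<Sum>b\<in>?R. ?F b x y)" by (intro sum.cong refl sum.swap)
  also have "\<dots> = (\<Sum>x\<in>?R. \<Sum>y\<in>?R. eta x * eta y * (if [x^2 = y^2] (mod int p) then int p - 1 else -1))"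
    by (intro sum.cong refl) (simp only: sum_distrib_left[symmetric] L4)
  also have "\<dots> = (\<Sum>x\<in>?R. \<Sum>y\<in>?R. ((if [y^2 = x^2] (mod int p) then int p * (eta x * eta y) else 0) - eta x * eta y))"
    by (intro sum.cong refl) (auto simp: cong_sym_eq algebra_simps)
  also have "\<dots> = (\<Sum>x\<in>?R. \<Sum>y\<in>?R. (if [y^2 = x^2] (mod int p) then int p * (eta x * eta y) else 0))
                 - (\<Sum>x\<in>?R. \<Sum>y\<in>?R. eta x * eta y)"
    by (simp only: sum_subtractf)
  also have "(\<Sum>x\<in>?R. \<Sum>y\<in>?R. eta x * eta y) = 0"
    using sum_product[of eta ?R eta ?R] sum_eta by simp
  also have "(\<Sum>x\<in>?R. \<Sum>y\<in>?R. (if [y^2 = x^2] (mod int p) then int p * (eta x * eta y) else 0))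
      = (\<Sum>x\<in>?R. (if x = 0 then 0 else 2 * int p))"
    by (intro sum.cong refl inner_J1) simp
  also have "\<dots> = (\<Sum>x\<in>?R - {0}. 2 * int p)"
    using sum_R_minus0[of "\<lambda>x. (if x = 0 then 0 else 2 * int p)"] by simp
  also have "\<dots> = 2 * int p * (\<Sum>x\<in>?R - {0}. 1)" by simp
  finally show ?thesis using card_R'_int by simp
qed

lemma J3: "(phi b)^2 \<le> 4 * int p"
proof (cases "int p dvd b")
  case True
  then have "phi b = phi 0" by (intro phi_cong) (simp add: cong_0_iff)
  then show ?thesis using phi_0 p_pos by simp
next
  case False
  let ?R = "{0..<int p}"
  let ?H = "\<lambda>z. (phi (b * z))^2"
  have "(int p - 1) * (phi b)^2 = (\<Sum>t\<in>?R - {0}. (phi b)^2)" using card_R'_int by simp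
  also have "\<dots> = (\<Sum>t\<in>?R - {0}. (phi (b * t^2))^2)"
  proof (rule sum.cong[OF refl])
    fix t assume t: "t \<in> ?R - {0}"
    have "phi (b * t^2) = eta t * phi b" by (rule phi_scale[OF R'_nd[OF t]])
    then show "(phi b)^2 = (phi (b * t^2))^2"
      using eta_sq_self[OF R'_nd[OF t]] by (simp add: power2_eq_square algebra_simps)
  qed
  also have "\<dots> = (\<Sum>t\<in>?R. (phi (b * t^2))^2)"
    using sum_R_minus0[of "\<lambda>t. (phi (b * t^2))^2"] phi_0 by simp
  also have "\<dots> = (\<Sum>t\<in>?R. ?H (t^2 mod int p))"
  proof (rule sum.cong[OF refl])
    fix t
    have "phi (b * t^2) = phi (b * (t^2 mod int p))"
      by (intro phi_cong cong_mult cong_refl) (simp add: cong_def)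
    then show "(phi (b * t^2))^2 = ?H (t^2 mod int p)" by simp
  qed
  also have "\<dots> = (\<Sum>z\<in>?R. (1 + eta z) * ?H z)" by (rule sum_sq)
  also have "\<dots> \<le> (\<Sum>z\<in>?R. 2 * ?H z)"
  proof (rule sum_mono)
    fix z
    have "1 + eta z \<le> 2" using eta_vals[of z] by auto
    then show "(1 + eta z) * ?H z \<le> 2 * ?H z" by (intro mult_right_mono) simp_all
  qed
  also have "\<dots> = 2 * (\<Sum>z\<in>?R. (\<lambda>u. (phi u)^2) ((b * z + 0) mod int p))"
    by (simp add: sum_distrib_left phi_cong[OF mod_cong_self])
  also have "(\<Sum>z\<in>?R. (\<lambda>u. (phi u)^2) ((b * z + 0) mod int p)) = (\<Sum>z\<in>?R. (phi z)^2)"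
    by (rule reindex_affine[OF False])
  also have "\<dots> = 2 * (int p - 1) * int p" by (rule J1)
  finally have "(int p - 1) * (phi b)^2 \<le> 2 * (2 * (int p - 1) * int p)" .
  also have "2 * (2 * (int p - 1) * int p) = (int p - 1) * (4 * int p)" by (simp add: algebra_simps)
  finally have "(int p - 1) * (phi b)^2 \<le> (int p - 1) * (4 * int p)" .
  moreover have "int p - 1 > 0" using p_ge5 by simp
  ultimately show ?thesis by simp
qed

end

context qr begin

lemma p_nd2: "\<not> int p dvd 2"
  using zdvd_imp_le[of "int p" 2] p_gt2 by auto

lemma nd_mult: "\<not> int p dvd x \<Longrightarrow> \<not> int p dvd y \<Longrightarrow> \<not> int p dvd (x * y)"
  using prime_dvd_mult_iff[OF pri] by blast

lemma exists_i: "\<exists>i. [i^2 = -1] (mod int p)"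
  using eta_one_QR[OF eta_m1] unfolding QuadRes_def by blast

lemma i_nd: "[i^2 = -1] (mod int p) \<Longrightarrow> \<not> int p dvd i"
proof
  assume c: "[i^2 = -1] (mod int p)" and d: "int p dvd i"
  then have "int p dvd i^2" using dvd_mult2[of "int p" i i] by (simp add: power2_eq_square)
  then have "[i^2 = 0] (mod int p)" by (simp add: cong_0_iff)
  then have "[-1 = 0] (mod int p)" using c by (meson cong_sym cong_trans)
  then have "int p dvd 1" by (simp add: cong_0_iff)
  then show False using p_gt2 by simp
qed

lemma eta1_sqrt:
  assumes "eta z = 1"
  obtains s where "[s^2 = z] (mod int p)" "\<not> int p dvd s"
proof -
  obtain s where s: "[s^2 = z] (mod int p)" using eta_one_QR[OF assms] unfolding QuadRes_def by blast
  have "\<not> int p dvd s"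
  proof
    assume "int p dvd s"
    then have "int p dvd s^2" using dvd_mult2[of "int p" s s] by (simp add: power2_eq_square)
    then have "[s^2 = 0] (mod int p)" by (simp add: cong_0_iff)
    then have "[z = 0] (mod int p)" using s by (meson cong_sym cong_trans)
    then have "eta z = 0" by (simp add: eta_zero cong_0_iff)
    then show False using assms by simp
  qed
  then show ?thesis using that s by blast
qed

lemma good_w:
  assumes i: "[i^2 = -1] (mod int p)" and w: "\<not> int p dvd w"
    and hA: "eta (2 * w * (w^2 + a)) = 1" and hB: "eta (2 * i * w * (w^2 - a)) = 1"
  shows "sum_nz_powers 4 p 2 a"
proof -
  obtain s0 where s0: "[s0^2 = 2 * w * (w^2 + a)] (mod int p)" "\<not> int p dvd s0" using eta1_sqrt[OF hA] by blast
  obtain t0 where t0: "[t0^2 = 2 * i * w * (w^2 - a)] (mod int p)" "\<not> int p dvd t0" using eta1_sqrt[OF hB] by blast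
  have n2w: "\<not> int p dvd (2 * w)" using nd_mult[OF p_nd2 w] .
  obtain m where m: "[(2 * w) * m = 1] (mod int p)" using cong_solve_coprime_int[OF coprime_p[OF n2w]] by blast
  have nm: "\<not> int p dvd m"
  proof
    assume "int p dvd m"
    then have "[(2 * w) * m = 0] (mod int p)" by (simp add: cong_0_iff)
    then have "[1 = 0] (mod int p)" using m by (meson cong_sym cong_trans)
    then show False using p_gt2 by (simp add: cong_0_iff)
  qed
  define s where "s = s0 * m"
  define t where "t = t0 * i * m"
  have ns: "\<not> int p dvd s" unfolding s_def using nd_mult[OF s0(2) nm] .
  have nt: "\<not> int p dvd t" unfolding t_def using nd_mult[OF nd_mult[OF t0(2) i_nd[OF i]] nm] .
  have "s^4 + t^4 = m^4 * (s0^2)^2 + m^4 * (i^2)^2 * (t0^2)^2"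
    unfolding s_def t_def by (simp add: power_mult_distrib power2_eq_square power4_eq_xxxx algebra_simps)
  also have "[\<dots> = m^4 * (2 * w * (w^2 + a))^2 + m^4 * (i^2)^2 * (2 * i * w * (w^2 - a))^2] (mod int p)"
    by (intro cong_add cong_mult cong_refl cong_pow s0(1) t0(1))
  also have "m^4 * (2 * w * (w^2 + a))^2 + m^4 * (i^2)^2 * (2 * i * w * (w^2 - a))^2
      = m^4 * (4 * w^2 * (w^2 + a)^2) + m^4 * (4 * w^2 * (w^2 - a)^2) * (i^2)^3"
    by (simp add: power_mult_distrib power2_eq_square power3_eq_cube algebra_simps)
  also have "[\<dots> = m^4 * (4 * w^2 * (w^2 + a)^2) + m^4 * (4 * w^2 * (w^2 - a)^2) * (-1)^3] (mod int p)"
    by (intro cong_add cong_mult cong_refl cong_pow i)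
  also have "m^4 * (4 * w^2 * (w^2 + a)^2) + m^4 * (4 * w^2 * (w^2 - a)^2) * (-1)^3 = ((2 * w) * m)^4 * a"
    by (simp add: power_mult_distrib power2_eq_square power4_eq_xxxx power3_eq_cube algebra_simps)
  also have "[\<dots> = 1^4 * a] (mod int p)"
    by (intro cong_mult cong_refl cong_pow m)
  finally have c: "[s^4 + t^4 = a] (mod int p)" by simp
  show ?thesis unfolding sum_nz_powers_def
  proof (intro exI[of _ "\<lambda>j::nat. if j = 0 then s else t"] conjI)
    show "\<forall>j<(2::nat). \<not> int p dvd (if j = 0 then s else t)" using ns nt by auto
    show "[(\<Sum>j<(2::nat). (if j = 0 then s else t) ^ 4) = a] (mod int p)"
      using c by (simp add: numeral_2_eq_2)
  qed
qed

end

lemma final_arith: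
  fixes u v w P :: int
  assumes "u^2 \<le> 4 * P" "v^2 \<le> 4 * P" "w^2 \<le> 4 * P" "P \<ge> 61" "P - 14 \<le> \<bar>u\<bar> + \<bar>v\<bar> + \<bar>w\<bar>"
  shows False
proof -
  let ?S = "\<bar>u\<bar> + \<bar>v\<bar> + \<bar>w\<bar>"
  have sq: "?S^2 \<le> 3 * (u^2 + v^2 + w^2)"
  proof -
    have "3 * (u^2 + v^2 + w^2) - ?S^2 = (\<bar>u\<bar> - \<bar>v\<bar>)^2 + (\<bar>v\<bar> - \<bar>w\<bar>)^2 + (\<bar>u\<bar> - \<bar>w\<bar>)^2"
      by (simp add: power2_eq_square algebra_simps)
    moreover have "(\<bar>u\<bar> - \<bar>v\<bar>)^2 + (\<bar>v\<bar> - \<bar>w\<bar>)^2 + (\<bar>u\<bar> - \<bar>w\<bar>)^2 \<ge> 0" by simp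
    ultimately show ?thesis by linarith
  qed
  have "(P - 14)^2 \<le> ?S^2" using assms(4,5) by (intro power_mono) auto
  moreover have "u^2 + v^2 + w^2 \<le> 4 * P + 4 * P + 4 * P" using add_mono[OF add_mono[OF assms(1) assms(2)] assms(3)] .
  then have "3 * (u^2 + v^2 + w^2) \<le> 36 * P" by simp
  ultimately have "(P - 14)^2 \<le> 36 * P" using sq by linarith
  moreover have "(P - 61) * (P - 3) \<ge> 0" using assms(4) by simp
  ultimately show False by (simp add: power2_eq_square algebra_simps)
qed

context qr begin

lemma sumG2:
  assumes a: "\<not> int p dvd a"
  shows "(\<Sum>z\<in>{0..<int p}. eta z * eta (z * (z^2 - a^2))) = -2"
proof -
  let ?R = "{0..<int p}"
  have e0: "eta 0 = 0" by (simp add: eta_zero)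
  have "(\<Sum>z\<in>?R. eta z * eta (z * (z^2 - a^2))) = (\<Sum>z\<in>?R - {0}. eta z * eta (z * (z^2 - a^2)))"
    using sum_R_minus0[of "\<lambda>z. eta z * eta (z * (z^2 - a^2))"] e0 by simp
  also have "\<dots> = (\<Sum>z\<in>?R - {0}. eta ((z + -a) * (z + a)))"
  proof (rule sum.cong[OF refl])
    fix z assume z: "z \<in> ?R - {0}"
    have "eta z * eta (z * (z^2 - a^2)) = (eta z * eta z) * eta (z^2 - a^2)" by (simp add: eta_mult)
    also have "\<dots> = eta (z^2 - a^2)" using eta_sq_self[OF R'_nd[OF z]] by simp
    also have "\<dots> = eta ((z + -a) * (z + a))" by (rule arg_cong[where f = eta]) (simp add: power2_eq_square algebra_simps)
    finally show "eta z * eta (z * (z^2 - a^2)) = eta ((z + -a) * (z + a))" .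
  qed
  also have "\<dots> = (\<Sum>z\<in>?R. eta ((z + -a) * (z + a))) - eta ((0 + -a) * (0 + a))"
    using sum_R_minus0[of "\<lambda>z. eta ((z + -a) * (z + a))"] by simp
  also have "(\<Sum>z\<in>?R. eta ((z + -a) * (z + a))) = -1"
  proof -
    have "\<not> [-a = a] (mod int p)"
    proof
      assume "[-a = a] (mod int p)"
      then have "int p dvd (-a - a)" by (simp add: cong_iff_dvd_diff)
      then have "int p dvd (2 * a)" by (metis dvd_minus_iff minus_diff_eq mult_2 diff_minus_eq_add add.commute)
      then show False using prime_dvd_mult_iff[OF pri] p_nd2 a by blast
    qed
    then show ?thesis using L4[of "-a" a] by simp
  qed
  also have "eta ((0 + -a) * (0 + a)) = 1"
  proof -
    have "(0 + -a) * (0 + a) = -1 * (a * a)" by simp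
    then show ?thesis using eta_sq_self[OF a] eta_m1 by (simp only: eta_mult)
  qed
  finally show ?thesis by simp
qed

lemma T_identity:
  assumes i: "[i^2 = -1] (mod int p)" and a: "\<not> int p dvd a"
  shows "(\<Sum>w\<in>{0..<int p}. (1 + eta (2*w*(w^2+a))) * (1 + eta (2*i*w*(w^2-a))))
         = int p + eta 2 * phi a + eta (2*i) * phi (-a) + eta i * (phi (-(a^2)) - 2)"
proof -
  let ?R = "{0..<int p}"
  let ?X = "\<lambda>w. eta (2*w*(w^2+a))"
  let ?Y = "\<lambda>w. eta (2*i*w*(w^2-a))"
  let ?G = "\<lambda>z. eta (z * (z^2 - a^2))"
  have split: "(\<Sum>w\<in>?R. (1 + ?X w) * (1 + ?Y w)) =
      (\<Sum>w\<in>?R. 1) + (\<Sum>w\<in>?R. ?X w) + (\<Sum>w\<in>?R. ?Y w) + (\<Sum>w\<in>?R. ?X w * ?Y w)"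
    by (simp add: sum.distrib algebra_simps)
  have s1: "(\<Sum>w\<in>?R. (1::int)) = int p" by simp
  have s2: "(\<Sum>w\<in>?R. ?X w) = eta 2 * phi a"
    unfolding phi_def sum_distrib_left by (intro sum.cong refl) (simp add: eta_mult)
  have s3: "(\<Sum>w\<in>?R. ?Y w) = eta (2*i) * phi (-a)"
    unfolding phi_def sum_distrib_left
  proof (intro sum.cong refl)
    fix w
    have "2*i*w*(w^2-a) = (2*i) * (w * (w^2 + -a))" by simp
    then show "?Y w = eta (2*i) * (eta w * eta (w^2 + -a))" by (simp only: eta_mult)
  qed
  have s4: "(\<Sum>w\<in>?R. ?X w * ?Y w) = eta i * (\<Sum>w\<in>?R. ?G (w^2 mod int p))"
    unfolding sum_distrib_left
  proof (intro sum.cong refl)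
    fix w
    have "?X w * ?Y w = eta ((2*w*(w^2+a)) * (2*i*w*(w^2-a)))" by (simp only: eta_mult)
    also have "(2*w*(w^2+a)) * (2*i*w*(w^2-a)) = i * (2^2 * (w^2 * ((w^2)^2 - a^2)))"
      by (simp add: power2_eq_square algebra_simps)
    also have "eta \<dots> = eta i * eta (w^2 * ((w^2)^2 - a^2))"
      using eta_sq[OF p_nd2] by (simp only: eta_mult)
    also have "eta (w^2 * ((w^2)^2 - a^2)) = ?G (w^2 mod int p)"
      by (intro eta_cong cong_mult cong_diff cong_pow cong_refl) (simp_all add: cong_def)
    finally show "?X w * ?Y w = eta i * ?G (w^2 mod int p)" .
  qed
  have s5: "(\<Sum>w\<in>?R. ?G (w^2 mod int p)) = phi (-(a^2)) - 2"
  proof -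
    have "(\<Sum>w\<in>?R. ?G (w^2 mod int p)) = (\<Sum>z\<in>?R. (1 + eta z) * ?G z)" by (rule sum_sq)
    also have "\<dots> = (\<Sum>z\<in>?R. ?G z) + (\<Sum>z\<in>?R. eta z * ?G z)"
      by (simp add: sum.distrib algebra_simps)
    also have "(\<Sum>z\<in>?R. ?G z) = phi (-(a^2))"
      unfolding phi_def
    proof (intro sum.cong refl)
      fix z
      have "z * (z^2 - a^2) = z * (z^2 + -(a^2))" by simp
      then show "?G z = eta z * eta (z^2 + -(a^2))" by (simp only: eta_mult)
    qed
    also have "(\<Sum>z\<in>?R. eta z * ?G z) = -2" by (rule sumG2[OF a])
    finally show ?thesis by simp
  qed
  show ?thesis using split s1 s2 s3 s4 s5 by simp
qed

end

context qr begin

lemma T_le: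
  assumes i: "[i^2 = -1] (mod int p)" and a: "\<not> int p dvd a"
    and nogood: "\<And>w. \<not> int p dvd w \<Longrightarrow> \<not> (eta (2*w*(w^2+a)) = 1 \<and> eta (2*i*w*(w^2-a)) = 1)"
  shows "(\<Sum>w\<in>{0..<int p}. (1 + eta (2*w*(w^2+a))) * (1 + eta (2*i*w*(w^2-a)))) \<le> 12"
proof -
  let ?R = "{0..<int p}"
  let ?P = "\<lambda>w. int p dvd (2*w*(w^2+a)) \<or> int p dvd (2*i*w*(w^2-a))"
  let ?S = "\<lambda>z. {t \<in> ?R. [t^2 = z] (mod int p)}"
  have tm: "(1 + eta (2*w*(w^2+a))) * (1 + eta (2*i*w*(w^2-a))) \<le> (if ?P w then 2 else 0)" for w
  proof (cases "?P w")
    case True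
    have v1: "eta (2*w*(w^2+a)) \<in> {-1,0,1}" "eta (2*i*w*(w^2-a)) \<in> {-1,0,1}" by (rule eta_vals)+
    from True have "eta (2*w*(w^2+a)) = 0 \<or> eta (2*i*w*(w^2-a)) = 0" by (simp add: eta_zero)
    then show ?thesis using True v1 by auto
  next
    case False
    have nw: "\<not> int p dvd w" using False by auto
    have "eta (2*w*(w^2+a)) \<in> {-1,1}" "eta (2*i*w*(w^2-a)) \<in> {-1,1}"
      using False eta_nz by auto
    then show ?thesis using nogood[OF nw] False by auto
  qed
  have sub: "{w \<in> ?R. ?P w} \<subseteq> ?S 0 \<union> ?S (-a) \<union> ?S a"
  proof
    fix w assume w: "w \<in> {w \<in> ?R. ?P w}"
    have ni: "\<not> int p dvd i" using i_nd[OF i] .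
    from w have "int p dvd 2 \<or> int p dvd w \<or> int p dvd (w^2+a) \<or> int p dvd i \<or> int p dvd (w^2-a)"
      using prime_dvd_mult_iff[OF pri] by auto
    then have "int p dvd w \<or> int p dvd (w^2+a) \<or> int p dvd (w^2-a)" using p_nd2 ni by blast
    then have "[w^2 = 0] (mod int p) \<or> [w^2 = -a] (mod int p) \<or> [w^2 = a] (mod int p)"
    proof (elim disjE)
      assume "int p dvd w"
      then have "int p dvd w^2" using dvd_mult2[of "int p" w w] by (simp add: power2_eq_square)
      then show ?thesis by (simp add: cong_0_iff)
    qed (simp_all add: cong_iff_dvd_diff)
    then show "w \<in> ?S 0 \<union> ?S (-a) \<union> ?S a" using w by auto
  qed
  have fin: "finite (?S z)" for z by (rule finite_subset[of _ ?R]) auto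
  have "card {w \<in> ?R. ?P w} \<le> card (?S 0 \<union> ?S (-a) \<union> ?S a)"
    by (rule card_mono[OF _ sub]) (intro finite_UnI fin)
  also have "\<dots> \<le> card (?S 0) + card (?S (-a)) + card (?S a)"
    by (meson card_Un_le add_right_mono order_trans)
  also have "\<dots> \<le> 6" using card_sqroots_le[of 0] card_sqroots_le[of "-a"] card_sqroots_le[of a] by simp
  finally have cardle: "card {w \<in> ?R. ?P w} \<le> 6" .
  have "(\<Sum>w\<in>?R. (1 + eta (2*w*(w^2+a))) * (1 + eta (2*i*w*(w^2-a)))) \<le> (\<Sum>w\<in>?R. (if ?P w then 2 else 0))"
    by (rule sum_mono) (rule tm)
  also have "(\<Sum>w\<in>?R. (if ?P w then 2 else 0)) = (\<Sum>w\<in>{w \<in> ?R. ?P w}. (2::int))"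
    using sum.inter_filter[of ?R "\<lambda>w. (2::int)" ?P] by simp
  also have "\<dots> = 2 * int (card {w \<in> ?R. ?P w})" by simp
  also have "\<dots> \<le> 12" using cardle by simp
  finally show ?thesis .
qed

lemma eta_times_ge: "eta x * (f::int) \<ge> - \<bar>f\<bar>"
  using eta_vals[of x] by auto

lemma main_rep:
  assumes p61: "p \<ge> 61" and a: "\<not> int p dvd a"
  shows "sum_nz_powers 4 p 2 a"
proof -
  obtain i where i: "[i^2 = -1] (mod int p)" using exists_i by blast
  show ?thesis
  proof (cases "\<exists>w. \<not> int p dvd w \<and> eta (2*w*(w^2+a)) = 1 \<and> eta (2*i*w*(w^2-a)) = 1")
    case True
    then obtain w where "\<not> int p dvd w" "eta (2*w*(w^2+a)) = 1" "eta (2*i*w*(w^2-a)) = 1" by blast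
    then show ?thesis using good_w[OF i] by blast
  next
    case False
    then have le: "int p + eta 2 * phi a + eta (2*i) * phi (-a) + eta i * (phi (-(a^2)) - 2) \<le> 12"
      using T_le[OF i a] T_identity[OF i a] by auto
    have "eta i * (phi (-(a^2)) - 2) \<ge> - \<bar>phi (-(a^2))\<bar> - 2"
      using eta_vals[of i] by auto
    then have "int p - 14 \<le> \<bar>phi a\<bar> + \<bar>phi (-a)\<bar> + \<bar>phi (-(a^2))\<bar>"
      using le eta_times_ge[where x=2 and f="phi a"] eta_times_ge[where x="2*i" and f="phi (-a)"] by linarith
    then show ?thesis using final_arith[OF J3 J3 J3, of a "-a" "-(a^2)"] p61 by simp
  qed
qed

end

lemma list_witness:
  fixes xs :: "int list"
  assumes "\<forall>x\<in>set xs. \<not> int p dvd x" "[sum_list (map (\<lambda>x. x^d) xs) = a] (mod int p)"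
  shows "sum_nz_powers d p (length xs) a"
  unfolding sum_nz_powers_def
proof (intro exI[of _ "\<lambda>i. xs ! i"] conjI)
  show "\<forall>i<length xs. \<not> int p dvd xs ! i" using assms(1) by auto
  have "(\<Sum>i<length xs. xs ! i ^ d) = sum_list (map (\<lambda>x. x^d) xs)"
    by (simp add: sum_list_sum_nth atLeast0LessThan)
  then show "[(\<Sum>i<length xs. xs ! i ^ d) = a] (mod int p)" using assms(2) by simp
qed

lemma not_nz0: "\<not> int p dvd a \<Longrightarrow> \<not> sum_nz_powers d p 0 a"
  unfolding sum_nz_powers_def by (auto simp: cong_iff_dvd_diff)

lemma s_pow_le: "sum_nz_powers d p k a \<Longrightarrow> s_pow d p a \<le> k"
  unfolding s_pow_def by (rule Least_le)

lemma s_pow_ge: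
  assumes "sum_nz_powers d p k a" "\<forall>j<m. \<not> sum_nz_powers d p j a"
  shows "m \<le> s_pow d p a"
proof -
  have "sum_nz_powers d p (s_pow d p a) a" unfolding s_pow_def by (rule LeastI[of "\<lambda>k. sum_nz_powers d p k a", OF assms(1)])
  then show ?thesis using assms(2) by (meson not_less)
qed

lemma g_pow_eq:
  assumes "\<forall>a\<in>{1..int p - 1}. s_pow d p a \<le> K" "a0 \<in> {1..int p - 1}" "K \<le> s_pow d p a0"
  shows "g_pow d p = K"
  unfolding g_pow_def
proof (rule Max_eqI)
  show "finite ((\<lambda>a. s_pow d p a) ` {1..int p - 1})" by simp
  show "\<And>y. y \<in> (\<lambda>a. s_pow d p a) ` {1..int p - 1} \<Longrightarrow> y \<le> K" using assms(1) by auto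
  have "s_pow d p a0 = K" using assms by force
  then show "K \<in> (\<lambda>a. s_pow d p a) ` {1..int p - 1}" using assms(2) by force
qed

lemma g_pow_eq2:
  assumes up: "\<forall>a\<in>{1..int p - 1}. \<exists>k\<le>K. sum_nz_powers d p k a"
    and a0: "a0 \<in> {1..int p - 1}" and low: "\<forall>j<K. \<not> sum_nz_powers d p j a0"
  shows "g_pow d p = K"
proof (rule g_pow_eq)
  show "\<forall>a\<in>{1..int p - 1}. s_pow d p a \<le> K"
  proof
    fix a assume "a \<in> {1..int p - 1}"
    then obtain k where "k \<le> K" "sum_nz_powers d p k a" using up by blast
    then show "s_pow d p a \<le> K" using s_pow_le[of d p k a] by simp
  qed
  show "a0 \<in> {1..int p - 1}" by fact
  obtain k where "k \<le> K" "sum_nz_powers d p k a0" using up a0 by blast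
  then show "K \<le> s_pow d p a0" using s_pow_ge low by blast
qed

lemma table_upper:
  fixes W :: "int list list"
  assumes tab: "map (\<lambda>xs. sum_list (map (\<lambda>x. x^d) xs) mod int p) W = map int [1..<p]"
    and el: "\<forall>xs\<in>set W. length xs \<le> K \<and> (\<forall>x\<in>set xs. 0 < x \<and> x < int p)"
  shows "\<forall>a\<in>{1..int p - 1}. \<exists>k\<le>K. sum_nz_powers d p k a"
proof
  fix a assume a: "a \<in> {1..int p - 1}"
  define j where "j = nat a - 1"
  have len: "length W = p - 1" using arg_cong[OF tab, of length] by simp
  have j: "j < length W" using a len unfolding j_def by auto
  have "(map (\<lambda>xs. sum_list (map (\<lambda>x. x^d) xs) mod int p) W) ! j = (map int [1..<p]) ! j"
    using tab by simp
  then have "sum_list (map (\<lambda>x. x^d) (W ! j)) mod int p = int (1 + j)"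
    using j len by simp
  also have "int (1 + j) = a" using a unfolding j_def by auto
  finally have c: "[sum_list (map (\<lambda>x. x^d) (W ! j)) = a] (mod int p)"
    using a by (simp add: cong_def)
  have wj: "W ! j \<in> set W" using j by simp
  have "\<forall>x\<in>set (W ! j). \<not> int p dvd x"
  proof
    fix x assume "x \<in> set (W ! j)"
    then have "0 < x" "x < int p" using el wj by auto
    then show "\<not> int p dvd x" using zdvd_imp_le by fastforce
  qed
  then have "sum_nz_powers d p (length (W ! j)) a" using list_witness c by blast
  moreover have "length (W ! j) \<le> K" using el wj by auto
  ultimately show "\<exists>k\<le>K. sum_nz_powers d p k a" by blast
qed

lemma Q_lemma:
  assumes p: "p > 0" and tab: "\<forall>r\<in>set [1..<p]. (int r)^d mod int p \<in> Q" and x: "\<not> int p dvd x"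
  shows "x^d mod int p \<in> Q"
proof -
  define r where "r = nat (x mod int p)"
  have xm: "x mod int p \<noteq> 0" using x by (simp add: dvd_eq_mod_eq_0)
  have ir: "int r = x mod int p" unfolding r_def using p by simp
  have b: "x mod int p < int p" using p by simp
  have "r \<noteq> 0" using xm ir by auto
  moreover have "r < p" using b ir by linarith
  ultimately have "r \<in> set [1..<p]" by simp
  then have "(int r)^d mod int p \<in> Q" using tab by blast
  then show ?thesis unfolding ir by (simp add: power_mod)
qed

lemma not_nz1:
  assumes Q: "\<And>x. \<not> int p dvd x \<Longrightarrow> x^d mod int p \<in> Q" and a: "a mod int p \<notin> Q"
  shows "\<not> sum_nz_powers d p 1 a"
proof
  assume "sum_nz_powers d p 1 a"
  then obtain as :: "nat \<Rightarrow> int" where n: "\<not> int p dvd as 0" and c: "[as 0 ^ d = a] (mod int p)"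
    unfolding sum_nz_powers_def by auto
  have "as 0 ^ d mod int p \<in> Q" using Q[OF n] .
  moreover have "as 0 ^ d mod int p = a mod int p" using c by (simp add: cong_def)
  ultimately have "a mod int p \<in> Q" by simp
  then show False using a by simp
qed

lemma not_nz2:
  assumes Q: "\<And>x. \<not> int p dvd x \<Longrightarrow> x^d mod int p \<in> Q"
    and a: "\<forall>q1\<in>Q. \<forall>q2\<in>Q. (q1 + q2) mod int p \<noteq> a mod int p"
  shows "\<not> sum_nz_powers d p 2 a"
proof
  assume "sum_nz_powers d p 2 a"
  then obtain as :: "nat \<Rightarrow> int" where n: "\<not> int p dvd as 0" "\<not> int p dvd as 1"
    and c: "[as 0 ^ d + as 1 ^ d = a] (mod int p)"
    unfolding sum_nz_powers_def by (auto simp: numeral_2_eq_2)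
  have "(as 0 ^ d mod int p + as 1 ^ d mod int p) mod int p = a mod int p"
    using c by (simp add: cong_def mod_add_eq)
  moreover have "as 0 ^ d mod int p \<in> Q" "as 1 ^ d mod int p \<in> Q" using Q n by auto
  ultimately show False using a by blast
qed

lemma not_prime_by: "(d::nat) dvd n \<Longrightarrow> 1 < d \<Longrightarrow> d < n \<Longrightarrow> \<not> prime n"
  using prime_nat_iff by auto

lemma small_primes:
  fixes p :: nat
  assumes "prime p" "p mod 4 = 1" "p < 61"
  shows "p \<in> {5, 13, 17, 29, 37, 41, 53}"
proof -
  have "p = 1 \<or> p = 5 \<or> p = 9 \<or> p = 13 \<or> p = 17 \<or> p = 21 \<or> p = 25 \<or> p = 29 \<or> p = 33 \<or> p = 37 \<or> p = 41 \<or> p = 45 \<or> p = 49 \<or> p = 53 \<or> p = 57" using assms(2,3) by presburger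
  moreover have "p \<noteq> 1" using assms(1) by auto
  moreover have "\<not> prime (9::nat)" by (rule not_prime_by[of 3]) simp_all
  moreover have "\<not> prime (21::nat)" by (rule not_prime_by[of 3]) simp_all
  moreover have "\<not> prime (25::nat)" by (rule not_prime_by[of 5]) simp_all
  moreover have "\<not> prime (33::nat)" by (rule not_prime_by[of 3]) simp_all
  moreover have "\<not> prime (45::nat)" by (rule not_prime_by[of 3]) simp_all
  moreover have "\<not> prime (49::nat)" by (rule not_prime_by[of 7]) simp_all
  moreover have "\<not> prime (57::nat)" by (rule not_prime_by[of 3]) simp_all
  ultimately show ?thesis using assms(1) by auto
qed



lemma up5: "\<forall>a\<in>{1..int 5 - 1}. \<exists>k\<le>4. sum_nz_powers 4 5 k a"
  by (rule table_upper[where W = "[[1], [1,1], [1,1,1], [1,1,1,1]]"]) (simp_all add: upt_rec)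

lemma Q5: "\<not> int 5 dvd x \<Longrightarrow> x^4 mod int 5 \<in> {1}"
  by (rule Q_lemma) (simp_all add: upt_rec)

lemma up13: "\<forall>a\<in>{1..int 13 - 1}. \<exists>k\<le>3. sum_nz_powers 4 13 k a"
  by (rule table_upper[where W = "[[1], [1,1], [2], [1,2], [4,4], [2,2], [1,2,2], [2,4,4], [4], [1,4], [1,1,4], [2,4]]"]) (simp_all add: upt_rec)

lemma Q13: "\<not> int 13 dvd x \<Longrightarrow> x^4 mod int 13 \<in> {1, 3, 9}"
  by (rule Q_lemma) (simp_all add: upt_rec)

lemma up17: "\<forall>a\<in>{1..int 17 - 1}. \<exists>k\<le>3. sum_nz_powers 4 17 k a"
  by (rule table_upper[where W = "[[1], [1,1], [6,2], [6], [1,6], [1,1,6], [6,6,2], [6,6], [3,3], [1,3,3], [3,2,2], [3,2], [3], [1,3], [2,2], [2]]"]) (simp_all add: upt_rec)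

lemma Q17: "\<not> int 17 dvd x \<Longrightarrow> x^4 mod int 17 \<in> {1, 4, 13, 16}"
  by (rule Q_lemma) (simp_all add: upt_rec)

lemma up29: "\<forall>a\<in>{1..int 29 - 1}. \<exists>k\<le>3. sum_nz_powers 4 29 k a"
  by (rule table_upper[where W = "[[1], [1,1], [8,11], [1,8,11], [8,8,6], [2,3,11], [8], [1,8], [1,1,8], [2,3], [2,4], [2,11], [1,2,11], [8,8], [6,4], [2], [1,2], [3,4], [3,11], [6], [1,6], [1,1,6], [3], [4], [11], [1,11], [8,6], [1,8,6]]"]) (simp_all add: upt_rec)

lemma Q29: "\<not> int 29 dvd x \<Longrightarrow> x^4 mod int 29 \<in> {1, 7, 16, 20, 23, 24, 25}"
  by (rule Q_lemma) (simp_all add: upt_rec)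

lemma up37: "\<forall>a\<in>{1..int 37 - 1}. \<exists>k\<le>2. sum_nz_powers 4 37 k a"
  by (rule table_upper[where W = "[[1], [1,1], [3,5], [3,4], [15,5], [15,4], [3], [1,3], [15], [10], [1,10], [9], [1,9], [3,3], [8,8], [2], [1,2], [15,15], [3,9], [10,10], [15,9], [10,9], [3,2], [9,9], [15,2], [8], [1,8], [9,2], [5,5], [5,4], [4,4], [2,2], [5], [4], [1,4], [10,8]]"]) (simp_all add: upt_rec)

lemma up41: "\<forall>a\<in>{1..int 41 - 1}. \<exists>k\<le>2. sum_nz_powers 4 41 k a"
  by (rule table_upper[where W = "[[1], [1,1], [11,3], [11], [1,11], [4,8], [7,6], [11,11], [4,3], [4], [1,4], [2,8], [7,12], [11,4], [2,3], [2], [1,2], [16], [1,16], [11,2], [6,8], [11,16], [7], [1,7], [6], [1,6], [11,7], [4,16], [11,6], [12,3], [12], [1,12], [4,7], [2,16], [11,12], [16,16], [8], [1,8], [2,7], [3]]"]) (simp_all add: upt_rec)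

lemma up53: "\<forall>a\<in>{1..int 53 - 1}. \<exists>k\<le>2. sum_nz_powers 4 53 k a"
  by (rule table_upper[where W = "[[1], [1,1], [15,17], [15,13], [2,5], [15,22], [11,13], [8,17], [11,22], [15], [1,15], [2,22], [11], [1,11], [8], [2], [1,2], [6,13], [3,4], [15,15], [3,17], [3,13], [15,11], [6], [1,6], [15,2], [10,4], [3], [1,3], [8,8], [8,2], [2,2], [5,4], [15,6], [5,17], [10], [1,10], [15,3], [8,6], [2,6], [11,3], [5], [1,5], [4], [1,4], [17], [13], [1,13], [22], [1,22], [8,10], [15,5]]"]) (simp_all add: upt_rec)


context qr begin

lemma nonres_a0: "\<exists>a0\<in>{1..int p - 1}. \<forall>j<2. \<not> sum_nz_powers 4 p j a0"
proof -
  obtain n where n: "eta n = -1" using exists_nonres by (elim exE)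
  have nd: "\<not> int p dvd n"
  proof
    assume "int p dvd n"
    then have "eta n = 0" by (simp only: eta_zero)
    then show False using n by simp
  qed
  define a0 where "a0 = n mod int p"
  have a0n: "[a0 = n] (mod int p)" unfolding a0_def by (simp add: cong_def)
  have "a0 \<noteq> 0" using nd unfolding a0_def by (simp add: dvd_eq_mod_eq_0)
  moreover have "0 \<le> a0" "a0 < int p" unfolding a0_def using p_pos by simp_all
  ultimately have a0R: "a0 \<in> {1..int p - 1}" by simp
  have nd0: "\<not> int p dvd a0"
  proof
    assume "int p dvd a0"
    then have "[a0 = 0] (mod int p)" by (simp add: cong_0_iff)
    then have "[n = 0] (mod int p)" using a0n by (meson cong_sym cong_trans)
    then show False using nd by (simp add: cong_0_iff)
  qed
  have "\<not> sum_nz_powers 4 p 1 a0"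
  proof
    assume "sum_nz_powers 4 p 1 a0"
    then obtain as :: "nat \<Rightarrow> int" where c: "[as 0 ^ 4 = a0] (mod int p)"
      unfolding sum_nz_powers_def by auto
    have "(as 0 ^ 2)^2 = as 0 ^ 4" by (simp add: power_mult[symmetric])
    then have "[(as 0 ^ 2)^2 = n] (mod int p)" using c a0n by (metis cong_trans)
    then have "QuadRes (int p) n" unfolding QuadRes_def by blast
    then have "eta n = 1" using eta_QR_one[OF nd] by simp
    then show False using n by simp
  qed
  moreover have "\<not> sum_nz_powers 4 p 0 a0" using not_nz0[OF nd0] .
  ultimately have "\<forall>j<2. \<not> sum_nz_powers 4 p j a0" by (auto simp: less_2_cases_iff)
  then show ?thesis using a0R by blast
qed

end

lemma low5: "\<forall>j<4. \<not> sum_nz_powers 4 5 j 4"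
proof (intro allI impI notI)
  fix j :: nat assume j: "j < 4" and s: "sum_nz_powers 4 5 j 4"
  then obtain as :: "nat \<Rightarrow> int" where n: "\<forall>i<j. \<not> int 5 dvd as i"
    and c: "[(\<Sum>i<j. as i ^ 4) = 4] (mod int 5)"
    unfolding sum_nz_powers_def by auto
  have "[(\<Sum>i<j. as i ^ 4) = (\<Sum>i<j. 1)] (mod int 5)"
  proof (rule cong_sum)
    fix i assume "i \<in> {..<j}"
    then have "as i ^ 4 mod int 5 \<in> {1}" using Q5 n by blast
    then show "[as i ^ 4 = 1] (mod int 5)" by (simp add: cong_def)
  qed
  then have "[int j = 4] (mod 5)" using c by (simp add: cong_sym_eq) (meson cong_sym cong_trans)
  then have "int j mod 5 = 4" by (simp add: cong_def)
  moreover have "int j mod 5 = int j" using j by simp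
  ultimately show False using j by simp
qed

lemma low13: "\<forall>j<3. \<not> sum_nz_powers 4 13 j 7"
proof -
  have "\<not> sum_nz_powers 4 13 0 7" by (rule not_nz0) simp
  moreover have "\<not> sum_nz_powers 4 13 1 7"
  proof (rule not_nz1[OF Q13])
    show "(7::int) mod int 13 \<notin> {1,3,9}" by simp
  qed
  moreover have "\<not> sum_nz_powers 4 13 2 7"
  proof (rule not_nz2[OF Q13])
    show "\<forall>q1\<in>{1,3,9}. \<forall>q2\<in>{1,3,9}. (q1 + q2) mod int 13 \<noteq> (7::int) mod int 13" by simp
  qed
  ultimately show ?thesis by (auto simp: less_Suc_eq numeral_3_eq_3 numeral_2_eq_2)
qed

lemma low17: "\<forall>j<3. \<not> sum_nz_powers 4 17 j 6"
proof -
  have "\<not> sum_nz_powers 4 17 0 6" by (rule not_nz0) simp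
  moreover have "\<not> sum_nz_powers 4 17 1 6"
  proof (rule not_nz1[OF Q17])
    show "(6::int) mod int 17 \<notin> {1,4,13,16}" by simp
  qed
  moreover have "\<not> sum_nz_powers 4 17 2 6"
  proof (rule not_nz2[OF Q17])
    show "\<forall>q1\<in>{1,4,13,16}. \<forall>q2\<in>{1,4,13,16}. (q1 + q2) mod int 17 \<noteq> (6::int) mod int 17" by simp
  qed
  ultimately show ?thesis by (auto simp: less_Suc_eq numeral_3_eq_3 numeral_2_eq_2)
qed

lemma low29: "\<forall>j<3. \<not> sum_nz_powers 4 29 j 4"
proof -
  have "\<not> sum_nz_powers 4 29 0 4" by (rule not_nz0) simp
  moreover have "\<not> sum_nz_powers 4 29 1 4"
  proof (rule not_nz1[OF Q29])
    show "(4::int) mod int 29 \<notin> {1, 7, 16, 20, 23, 24, 25}" by simp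
  qed
  moreover have "\<not> sum_nz_powers 4 29 2 4"
  proof (rule not_nz2[OF Q29])
    show "\<forall>q1\<in>{1, 7, 16, 20, 23, 24, 25}. \<forall>q2\<in>{1, 7, 16, 20, 23, 24, 25}. (q1 + q2) mod int 29 \<noteq> (4::int) mod int 29" by simp
  qed
  ultimately show ?thesis by (auto simp: less_Suc_eq numeral_3_eq_3 numeral_2_eq_2)
qed

theorem theorem5:
  fixes p f :: nat and x y :: int
  assumes "prime p" and "p = 4 * f + 1"
    and "int p = x ^ 2 + 4 * y ^ 2" and "[x = 1] (mod 4)"
  shows "(p = 5 \<longrightarrow> g_pow 4 p = 4) \<and>
         (p \<in> {13, 17, 29} \<longrightarrow> g_pow 4 p = 3) \<and>
         (p \<notin> {5, 13, 17, 29} \<longrightarrow> g_pow 4 p = 2)"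
proof -
  have p4: "p mod 4 = 1" using assms(2) by simp
  interpret qr p by unfold_locales (fact assms(1), fact p4)
  have c5: "g_pow 4 5 = 4"
    by (rule g_pow_eq2[OF up5 _ low5]) simp
  have c13: "g_pow 4 13 = 3"
    by (rule g_pow_eq2[OF up13 _ low13]) simp
  have c17: "g_pow 4 17 = 3"
    by (rule g_pow_eq2[OF up17 _ low17]) simp
  have c29: "g_pow 4 29 = 3"
    by (rule g_pow_eq2[OF up29 _ low29]) simp
  have cgen: "g_pow 4 p = 2" if np: "p \<notin> {5, 13, 17, 29}"
  proof -
    have up: "\<forall>a\<in>{1..int p - 1}. \<exists>k\<le>2. sum_nz_powers 4 p k a"
    proof (cases "p \<ge> 61")
      case True
      show ?thesis
      proof
        fix a assume a: "a \<in> {1..int p - 1}"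
        then have "\<not> int p dvd a" using zdvd_imp_le by fastforce
        then show "\<exists>k\<le>2. sum_nz_powers 4 p k a" using main_rep[OF True] by blast
      qed
    next
      case False
      then have "p \<in> {5, 13, 17, 29, 37, 41, 53}" using small_primes[OF assms(1) p4] by simp
      then have "p = 37 \<or> p = 41 \<or> p = 53" using np by simp
      then show ?thesis using up37 up41 up53 by auto
    qed
    obtain a0 where a0: "a0 \<in> {1..int p - 1}" "\<forall>j<2. \<not> sum_nz_powers 4 p j a0"
      using nonres_a0 by blast
    show ?thesis by (rule g_pow_eq2[OF up a0])
  qed
  show ?thesis using c5 c13 c17 c29 cgen by auto
qed


end
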